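(* Let $A$ be a torsion-free abelian group and $p$ a prime. Then $A$ has a homomorphic image isomorphic to $\bigoplus_{\aleph_0}\mathbb{Z}(p^\infty)$ (a direct sum of countably infinitely many copies of $\mathbb{Z}(p^\infty)$) if and only if $A$ has infinite (torsion-free) rank.
   Context: All groups are abelian; $\mathbb{Z}(p^\infty)$ is the quasi-cyclic $p$-group. *)

theory Defs
  imports "HOL-Algebra.Algebra"
begin

text \<open>The quasi-cyclic (Pruefer) p-group Z(p^infinity), realised as the
  p-power-denominator rationals in [0,1) under addition modulo 1.\<close>
definition Zp_inf :: "nat \<Rightarrow> rat monoid" where
  "Zp_inf p = \<lparr> carrier = {q. 0 \<le> q \<and> q < 1 \<and>
                  (\<exists>(k::nat) (a::int). q = of_int a / of_nat p ^ k)},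
               monoid.mult = (\<lambda>x y. x + y - of_int (floor (x + y))),
               monoid.one = 0 \<rparr>"

definition Zp_inf_sum :: "nat \<Rightarrow> (nat \<Rightarrow> rat) monoid" where
  "Zp_inf_sum p = sum_group (UNIV :: nat set) (\<lambda>_. Zp_inf p)"

definition torsion_free :: "('a, 'b) monoid_scheme \<Rightarrow> bool" where
  "torsion_free G \<longleftrightarrow> (\<forall>x \<in> carrier G. \<forall>n::nat. n > 0 \<and> x [^]\<^bsub>G\<^esub> n = \<one>\<^bsub>G\<^esub> \<longrightarrow> x = \<one>\<^bsub>G\<^esub>)"

text \<open>Linear independence over the integers (written multiplicatively).\<close>
definition ab_independent :: "('a, 'b) monoid_scheme \<Rightarrow> 'a set \<Rightarrow> bool" where
  "ab_independent G S \<longleftrightarrow> S \<subseteq> carrier G \<and>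
     (\<forall>F c. F \<subseteq> S \<and> finite F \<and>
        finprod G (\<lambda>x. x [^]\<^bsub>G\<^esub> (c x :: int)) F = \<one>\<^bsub>G\<^esub> \<longrightarrow> (\<forall>x\<in>F. c x = 0))"

text \<open>Infinite (torsion-free) rank: there is an infinite independent subset
  (equivalently, maximal independent subsets are infinite).\<close>
definition infinite_rank :: "('a, 'b) monoid_scheme \<Rightarrow> bool" where
  "infinite_rank G \<longleftrightarrow> (\<exists>S. infinite S \<and> ab_independent G S)"

end

theory Submission
  imports Defs "HOL-Library.Countable_Set"
begin


definition padic :: "nat \<Rightarrow> rat set" where
  "padic p = {q. \<exists>(k::nat) (a::int). q = of_int a / of_nat p ^ k}"

lemma padic_int: "p > 0 \<Longrightarrow> of_int m \<in> padic p"
  unfolding padic_def by (intro CollectI exI[of _ 0] exI[of _ m]) simp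

lemma padic_add: assumes "p > 0" "x \<in> padic p" "y \<in> padic p" shows "x + y \<in> padic p"
proof -
  from assms obtain k a l b where x: "x = of_int a / of_nat p ^ k" and y: "y = of_int b / of_nat p ^ l"
    unfolding padic_def by auto
  have "x + y = of_int (a * p ^ l + b * p ^ k) / of_nat p ^ (k + l)"
    using assms(1) by (simp add: x y field_simps power_add)
  thus ?thesis unfolding padic_def by blast
qed

lemma padic_neg: assumes "x \<in> padic p" shows "- x \<in> padic p"
proof -
  from assms obtain k a where x: "x = of_int a / of_nat p ^ k" unfolding padic_def by auto
  have "-x = of_int (-a) / of_nat p ^ k" by (simp add: x)
  thus ?thesis unfolding padic_def by blast
qed

lemma padic_mult_int: assumes "x \<in> padic p" shows "of_int m * x \<in> padic p"
proof -
  from assms obtain k a where x: "x = of_int a / of_nat p ^ k" unfolding padic_def by auto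
  have "of_int m * x = of_int (m * a) / of_nat p ^ k" by (simp add: x)
  thus ?thesis unfolding padic_def by blast
qed

lemma padic_frac: assumes "p > 0" "x \<in> padic p" shows "frac x \<in> padic p"
proof -
  have "frac x = x + of_int (- \<lfloor>x\<rfloor>)" by (simp add: frac_def)
  thus ?thesis using padic_add[OF assms padic_int[OF assms(1)]] by metis
qed

lemma carrier_Zp_inf: "carrier (Zp_inf p) = {q \<in> padic p. 0 \<le> q \<and> q < 1}"
  unfolding Zp_inf_def padic_def by auto

lemma mult_Zp_inf: "x \<otimes>\<^bsub>Zp_inf p\<^esub> y = frac (x + y)"
  unfolding Zp_inf_def by (simp add: frac_def)

lemma one_Zp_inf: "\<one>\<^bsub>Zp_inf p\<^esub> = 0"
  unfolding Zp_inf_def by simp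

lemma frac_in_carrier: "p > 0 \<Longrightarrow> x \<in> padic p \<Longrightarrow> frac x \<in> carrier (Zp_inf p)"
  unfolding carrier_Zp_inf using padic_frac frac_lt_1 frac_ge_0 by auto

lemma frac_frac_add: "frac (frac x + y) = frac (x + (y::rat))"
proof -
  have "frac x + y = (x + y) + of_int (- \<lfloor>x\<rfloor>)" by (simp add: frac_def)
  thus ?thesis by (simp only: frac_add_of_int_right)
qed

lemma frac_id: "0 \<le> x \<Longrightarrow> x < 1 \<Longrightarrow> frac (x::rat) = x"
  by (simp add: frac_eq)

lemma comm_group_Zp_inf: assumes "p > 0" shows "comm_group (Zp_inf p)"
proof (rule group.group_comm_groupI)
  show "group (Zp_inf p)"
  proof (rule groupI)
    fix x y assume "x \<in> carrier (Zp_inf p)" "y \<in> carrier (Zp_inf p)"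
    then show "x \<otimes>\<^bsub>Zp_inf p\<^esub> y \<in> carrier (Zp_inf p)"
      unfolding mult_Zp_inf using assms by (intro frac_in_carrier padic_add) (auto simp: carrier_Zp_inf)
  next
    show "\<one>\<^bsub>Zp_inf p\<^esub> \<in> carrier (Zp_inf p)" using padic_int[OF assms, of 0]
      by (simp add: one_Zp_inf carrier_Zp_inf)
  next
    fix x y z assume "x \<in> carrier (Zp_inf p)" "y \<in> carrier (Zp_inf p)" "z \<in> carrier (Zp_inf p)"
    show "x \<otimes>\<^bsub>Zp_inf p\<^esub> y \<otimes>\<^bsub>Zp_inf p\<^esub> z = x \<otimes>\<^bsub>Zp_inf p\<^esub> (y \<otimes>\<^bsub>Zp_inf p\<^esub> z)"
      unfolding mult_Zp_inf by (metis frac_frac_add add.commute add.assoc)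
  next
    fix x assume "x \<in> carrier (Zp_inf p)"
    then show "\<one>\<^bsub>Zp_inf p\<^esub> \<otimes>\<^bsub>Zp_inf p\<^esub> x = x"
      unfolding mult_Zp_inf one_Zp_inf by (simp add: carrier_Zp_inf frac_id)
  next
    fix x assume x: "x \<in> carrier (Zp_inf p)"
    show "\<exists>y\<in>carrier (Zp_inf p). y \<otimes>\<^bsub>Zp_inf p\<^esub> x = \<one>\<^bsub>Zp_inf p\<^esub>"
    proof (intro bexI)
      show "frac (-x) \<in> carrier (Zp_inf p)" using x assms
        by (intro frac_in_carrier padic_neg) (auto simp: carrier_Zp_inf)
      show "frac (-x) \<otimes>\<^bsub>Zp_inf p\<^esub> x = \<one>\<^bsub>Zp_inf p\<^esub>"
        unfolding mult_Zp_inf one_Zp_inf by (simp add: frac_frac_add)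
    qed
  qed
next
  fix x y assume "x \<in> carrier (Zp_inf p)" "y \<in> carrier (Zp_inf p)"
  show "x \<otimes>\<^bsub>Zp_inf p\<^esub> y = y \<otimes>\<^bsub>Zp_inf p\<^esub> x" unfolding mult_Zp_inf by (simp add: add.commute)
qed


lemma inv_Zp_inf: assumes "p > 0" "y \<in> carrier (Zp_inf p)"
  shows "inv\<^bsub>Zp_inf p\<^esub> y = frac (- y)"
proof -
  have G: "group (Zp_inf p)" using comm_group_Zp_inf[OF assms(1)] comm_group.axioms(2) by blast
  show ?thesis
  proof (rule group.inv_equality[OF G])
    show "frac (- y) \<otimes>\<^bsub>Zp_inf p\<^esub> y = \<one>\<^bsub>Zp_inf p\<^esub>"
      unfolding mult_Zp_inf one_Zp_inf by simp
    show "frac (-y) \<in> carrier (Zp_inf p)" using assms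
      by (intro frac_in_carrier padic_neg) (auto simp: carrier_Zp_inf)
  qed (rule assms(2))
qed

lemma padic_mult_nat: "x \<in> padic p \<Longrightarrow> of_nat m * x \<in> padic p"
  using padic_mult_int[of x p "int m"] by simp

lemma frac_mult_frac: "frac (of_int n * frac y) = frac (of_int n * (y::rat))"
proof -
  have "of_int n * frac y = of_int n * y + of_int (- n * \<lfloor>y\<rfloor>)"
    by (simp add: frac_def algebra_simps)
  thus ?thesis by (simp only: frac_add_of_int_right)
qed

lemma nat_pow_Zp_inf: assumes "p > 0" "x \<in> carrier (Zp_inf p)"
  shows "x [^]\<^bsub>Zp_inf p\<^esub> (n::nat) = frac (of_nat n * x)"
proof (induction n)
  case 0 then show ?case by (simp add: one_Zp_inf)
next
  case (Suc n)
  have "x [^]\<^bsub>Zp_inf p\<^esub> Suc n = frac (frac (of_nat n * x) + x)"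
    by (simp only: nat_pow_Suc Suc mult_Zp_inf)
  also have "\<dots> = frac (of_nat n * x + x)" by (rule frac_frac_add)
  also have "of_nat n * x + x = of_nat (Suc n) * x" by (simp add: distrib_right)
  finally show ?case .
qed

lemma int_pow_Zp_inf: assumes "p > 0" "x \<in> carrier (Zp_inf p)"
  shows "x [^]\<^bsub>Zp_inf p\<^esub> (k::int) = frac (of_int k * x)"
proof -
  show ?thesis
  proof (cases "k < 0")
    case True
    have "x [^]\<^bsub>Zp_inf p\<^esub> k = inv\<^bsub>Zp_inf p\<^esub> (x [^]\<^bsub>Zp_inf p\<^esub> nat (- k))"
      using True by (simp only: int_pow_def2 if_True)
    also have "\<dots> = inv\<^bsub>Zp_inf p\<^esub> (frac (of_nat (nat (-k)) * x))"
      using assms by (simp only: nat_pow_Zp_inf)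
    also have "\<dots> = frac (- frac (of_nat (nat (-k)) * x))"
      using assms by (intro inv_Zp_inf frac_in_carrier padic_mult_nat) (auto simp: carrier_Zp_inf)
    also have "\<dots> = frac (- (of_nat (nat (-k)) * x))" by (rule frac_neg_frac)
    also have "- (of_nat (nat (-k)) * x) = of_int k * x" using True by simp
    finally show ?thesis .
  next
    case False
    then have "x [^]\<^bsub>Zp_inf p\<^esub> k = x [^]\<^bsub>Zp_inf p\<^esub> nat k" by (simp only: int_pow_def2 if_False)
    also have "\<dots> = frac (of_nat (nat k) * x)" using assms by (rule nat_pow_Zp_inf)
    also have "of_nat (nat k) * x = of_int k * x" using False by simp
    finally show ?thesis .
  qed
qed

lemma Zp_inf_div_prime:
  assumes p: "Factorial_Ring.prime p" and q: "Factorial_Ring.prime (q::nat)" and x: "x \<in> carrier (Zp_inf p)"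
  shows "\<exists>e\<in>carrier (Zp_inf p). e [^]\<^bsub>Zp_inf p\<^esub> q = x"
proof -
  have p0: "p > 0" using p prime_gt_0_nat by blast
  from x obtain k a where xa: "x = of_int a / of_nat p ^ k" and x01: "0 \<le> x" "x < 1"
    unfolding carrier_Zp_inf padic_def by auto
  show ?thesis
  proof (cases "q = p")
    case True
    have xp: "x / of_nat p = of_int a / of_nat p ^ Suc k" by (simp add: xa)
    have "x / of_nat p \<in> padic p" unfolding padic_def using xp by blast
    moreover have "0 \<le> x / of_nat p" using x01 by simp
    moreover have "x / of_nat p < 1" using x01 p0 by simp
    ultimately have c: "x / of_nat p \<in> carrier (Zp_inf p)" unfolding carrier_Zp_inf by simp
    moreover have "(x / of_nat p) [^]\<^bsub>Zp_inf p\<^esub> q = x"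
      using nat_pow_Zp_inf[OF p0 c, of q] True p0 x01 by (simp add: frac_id)
    ultimately show ?thesis by blast
  next
    case False
    have "coprime q p" using primes_coprime[OF q p False] .
    hence "coprime (int q) (int p ^ k)" by simp
    then obtain u v where uv: "u * int q + v * (int p ^ k) = 1"
      using bezout_int[of "int q" "int p ^ k"] by auto
    define e :: rat where "e = frac (of_int (u * a) / of_nat p ^ k)"
    have ce: "e \<in> carrier (Zp_inf p)" unfolding e_def
      by (rule frac_in_carrier[OF p0]) (unfold padic_def, blast)
    have "e [^]\<^bsub>Zp_inf p\<^esub> q = frac (of_int (int q) * frac (of_int (u * a) / of_nat p ^ k))"
      using nat_pow_Zp_inf[OF p0 ce, of q] by (simp add: e_def)
    also have "\<dots> = frac (of_int (int q) * (of_int (u * a) / of_nat p ^ k))"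
      by (rule frac_mult_frac)
    also have "of_int (int q) * (of_int (u * a) / of_nat p ^ k) = x + of_int (- v * a)"
    proof -
      have "rat_of_int (u * int q + v * (int p ^ k)) = 1" using uv by simp
      hence h2: "of_int u * of_nat q = (1 - of_int v * of_nat p ^ k :: rat)" by (simp add: algebra_simps)
      have "of_int (int q) * (of_int (u * a) / of_nat p ^ k :: rat)
          = (of_int u * of_nat q) * of_int a / of_nat p ^ k"
        by (simp add: algebra_simps)
      also have "\<dots> = (1 - of_int v * of_nat p ^ k) * of_int a / of_nat p ^ k"
        by (simp only: h2)
      also have "\<dots> = of_int a / of_nat p ^ k - of_int v * of_int a * (of_nat p ^ k / of_nat p ^ k)"
        by (simp add: algebra_simps diff_divide_distrib)
      also have "\<dots> = x + of_int (- v * a)" using p0 by (simp add: xa)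
      finally show ?thesis .
    qed
    also have "frac (x + of_int (- v * a)) = x" using x01 by (metis frac_add_of_int_right frac_id)
    finally show ?thesis using ce by blast
  qed
qed

lemma Zp_inf_divisible:
  assumes p: "Factorial_Ring.prime p" and x: "x \<in> carrier (Zp_inf p)" and n: "n > (0::nat)"
  shows "\<exists>e\<in>carrier (Zp_inf p). e [^]\<^bsub>Zp_inf p\<^esub> n = x"
  using n x
proof (induction n arbitrary: x rule: less_induct)
  case (less n)
  have G: "group (Zp_inf p)" using comm_group_Zp_inf p prime_gt_0_nat comm_group.axioms(2) by blast
  show ?case
  proof (cases "n = 1")
    case True
    have "x [^]\<^bsub>Zp_inf p\<^esub> n = x" using less(3) G True
      by (simp add: group.is_monoid monoid.l_one)
    then show ?thesis using less(3) by blast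
  next
    case False
    then obtain q where q: "Factorial_Ring.prime q" "q dvd n" using prime_divisor_exists[of n] less by auto
    then obtain m where nm: "n = q * m" by auto
    have q1: "q > 1" using q(1) prime_gt_1_nat by blast
    have "m > 0" using nm less(2) by (cases "m = 0") auto
    moreover have "m < n" using nm q1 \<open>m > 0\<close> by simp
    ultimately have "m > 0" "m < n" by auto
    then obtain e1 where e1: "e1 \<in> carrier (Zp_inf p)" "e1 [^]\<^bsub>Zp_inf p\<^esub> m = x"
      using less by blast
    obtain e where e: "e \<in> carrier (Zp_inf p)" "e [^]\<^bsub>Zp_inf p\<^esub> q = e1"
      using Zp_inf_div_prime[OF p q(1) e1(1)] by blast
    have "x = (e [^]\<^bsub>Zp_inf p\<^esub> q) [^]\<^bsub>Zp_inf p\<^esub> m"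
      using e e1 by simp
    also have "\<dots> = e [^]\<^bsub>Zp_inf p\<^esub> n"
      using e(1) by (simp add: nm monoid.nat_pow_pow[OF group.is_monoid[OF G]])
    finally have "e [^]\<^bsub>Zp_inf p\<^esub> n = x" by simp
    then show ?thesis using e by blast
  qed
qed


abbreviation "Z p \<equiv> Zp_inf p"
abbreviation "D p \<equiv> Zp_inf_sum p"

lemma group_Zp: "p > 0 \<Longrightarrow> group (Z p)"
  using comm_group_Zp_inf comm_group.axioms(2) by blast

lemma group_D: "p > 0 \<Longrightarrow> group (D p)"
  unfolding Zp_inf_sum_def by (rule sum_group) (rule group_Zp)

lemma comm_group_D: assumes "p > 0" shows "comm_group (D p)"
proof (rule group.group_comm_groupI[OF group_D[OF assms]])
  fix x y assume "x \<in> carrier (D p)" "y \<in> carrier (D p)"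
  show "x \<otimes>\<^bsub>D p\<^esub> y = y \<otimes>\<^bsub>D p\<^esub> x"
    unfolding Zp_inf_sum_def mult_sum_group mult_Zp_inf by (simp add: add.commute)
qed

lemma carrier_D: assumes "p > 0"
  shows "x \<in> carrier (D p) \<longleftrightarrow> (\<forall>i. x i \<in> carrier (Z p)) \<and> finite {i. x i \<noteq> 0}"
  unfolding Zp_inf_sum_def using group_Zp[OF assms]
  by (simp add: carrier_sum_group PiE_UNIV_domain one_Zp_inf Pi_iff)

lemma one_D: "\<one>\<^bsub>D p\<^esub> = (\<lambda>i. 0)"
  unfolding Zp_inf_sum_def by (simp add: one_Zp_inf restrict_UNIV)

lemma mult_D: "x \<otimes>\<^bsub>D p\<^esub> y = (\<lambda>i. x i \<otimes>\<^bsub>Z p\<^esub> y i)"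
  unfolding Zp_inf_sum_def by (simp add: restrict_UNIV)

lemma nat_pow_D: "(x [^]\<^bsub>D p\<^esub> (n::nat)) i = x i [^]\<^bsub>Z p\<^esub> n"
proof (induction n)
  case 0 show ?case by (simp only: nat_pow_0 one_D one_Zp_inf)
next
  case (Suc n) show ?case by (simp only: nat_pow_Suc mult_D Suc)
qed

lemma inv_D: assumes "p > 0" "x \<in> carrier (D p)"
  shows "inv\<^bsub>D p\<^esub> x = (\<lambda>i. inv\<^bsub>Z p\<^esub> (x i))"
  using inv_sum_group[of UNIV "\<lambda>_. Z p" x] group_Zp[OF assms(1)] assms(2)
  unfolding Zp_inf_sum_def by (simp add: restrict_UNIV)

lemma int_pow_D: assumes "p > 0" "x \<in> carrier (D p)"
  shows "(x [^]\<^bsub>D p\<^esub> (k::int)) i = x i [^]\<^bsub>Z p\<^esub> k"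
proof (cases "k < 0")
  case True
  have c: "x [^]\<^bsub>D p\<^esub> nat (-k) \<in> carrier (D p)"
    using assms group_D[OF assms(1)] by (simp add: group.is_monoid monoid.nat_pow_closed)
  have "x [^]\<^bsub>D p\<^esub> k = inv\<^bsub>D p\<^esub> (x [^]\<^bsub>D p\<^esub> nat (-k))"
    using True by (simp only: int_pow_def2 if_True)
  also have "\<dots> = (\<lambda>i. inv\<^bsub>Z p\<^esub> ((x [^]\<^bsub>D p\<^esub> nat (-k)) i))"
    using assms(1) c by (rule inv_D)
  finally have "(x [^]\<^bsub>D p\<^esub> k) i = inv\<^bsub>Z p\<^esub> (x i [^]\<^bsub>Z p\<^esub> nat (-k))"
    by (simp only: nat_pow_D)
  also have "\<dots> = x i [^]\<^bsub>Z p\<^esub> k" using True by (simp only: int_pow_def2 if_True)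
  finally show ?thesis .
next
  case False
  have "(x [^]\<^bsub>D p\<^esub> k) i = (x [^]\<^bsub>D p\<^esub> nat k) i" using False by (simp only: int_pow_def2 if_False)
  also have "\<dots> = x i [^]\<^bsub>Z p\<^esub> nat k" by (rule nat_pow_D)
  also have "\<dots> = x i [^]\<^bsub>Z p\<^esub> k" using False by (simp only: int_pow_def2 if_False)
  finally show ?thesis .
qed

lemma D_divisible: assumes p: "Factorial_Ring.prime p" and x: "x \<in> carrier (D p)" and n: "n > (0::nat)"
  shows "\<exists>e\<in>carrier (D p). e [^]\<^bsub>D p\<^esub> n = x"
proof -
  have p0: "p > 0" using p prime_gt_0_nat by blast
  define e where "e = (\<lambda>i. if x i = 0 then 0 else (SOME e. e \<in> carrier (Z p) \<and> e [^]\<^bsub>Z p\<^esub> n = x i))"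
  have xi: "x i \<in> carrier (Z p)" for i using x carrier_D[OF p0] by blast
  have M: "monoid (Z p)" using group_Zp[OF p0] group.is_monoid by blast
  have ei: "e i \<in> carrier (Z p) \<and> e i [^]\<^bsub>Z p\<^esub> n = x i" for i
  proof (cases "x i = 0")
    case True
    have "e i = \<one>\<^bsub>Z p\<^esub>" using True by (simp add: e_def one_Zp_inf)
    then show ?thesis using True M monoid.nat_pow_one[OF M] monoid.one_closed[OF M]
      by (simp add: one_Zp_inf)
  next
    case False
    have ex: "\<exists>e. e \<in> carrier (Z p) \<and> e [^]\<^bsub>Z p\<^esub> n = x i"
      using Zp_inf_divisible[OF p xi n] by blast
    have "e i = (SOME e. e \<in> carrier (Z p) \<and> e [^]\<^bsub>Z p\<^esub> n = x i)"
      using False by (simp add: e_def)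
    then show ?thesis using someI_ex[OF ex] by simp
  qed
  have "finite {i. x i \<noteq> 0}" using x carrier_D[OF p0] by blast
  moreover have "{i. e i \<noteq> 0} \<subseteq> {i. x i \<noteq> 0}" by (auto simp: e_def)
  ultimately have "e \<in> carrier (D p)" using ei carrier_D[OF p0] finite_subset by blast
  moreover have "e [^]\<^bsub>D p\<^esub> n = x" using ei by (simp add: fun_eq_iff nat_pow_D)
  ultimately show ?thesis by blast
qed

lemma countable_carrier_D: assumes "p > 0" shows "countable (carrier (D p))"
proof (rule countable_subset)
  show "carrier (D p) \<subseteq> range (\<lambda>l::rat list. \<lambda>i. if i < length l then l ! i else 0)"
  proof
    fix x assume "x \<in> carrier (D p)"
    then have "finite {i. x i \<noteq> 0}" using carrier_D[OF assms] by blast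
    then obtain N where "{i. x i \<noteq> 0} \<subseteq> {..<N}"
      using finite_nat_bounded by metis
    then have N: "\<And>i. i \<in> {i. x i \<noteq> 0} \<Longrightarrow> i < N" by auto
    have "x = (\<lambda>i. if i < length (map x [0..<N]) then map x [0..<N] ! i else 0)"
    proof (rule ext)
      fix i show "x i = (if i < length (map x [0..<N]) then map x [0..<N] ! i else 0)"
      proof (cases "i < N")
        case True then show ?thesis by simp
      next
        case False then have "x i = 0" using N by (metis mem_Collect_eq)
        then show ?thesis using False by simp
      qed
    qed
    then show "x \<in> range (\<lambda>l::rat list. \<lambda>i. if i < length l then l ! i else 0)" by blast
  qed
  show "countable (range (\<lambda>l::rat list. \<lambda>i. if i < length l then l ! i else 0))"
    by (rule countable_image) (rule countableI_type)
qed

lemma proj_hom: assumes "p > 0" shows "(\<lambda>x. x j) \<in> hom (D p) (Z p)"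
  unfolding hom_def using carrier_D[OF assms]
  by (auto simp: mult_D)

definition eps :: "nat \<Rightarrow> nat \<Rightarrow> nat \<Rightarrow> rat" where
  "eps p i = (\<lambda>j. if j = i then 1 / of_nat p else 0)"

lemma eps_carrier: assumes "p > 1" shows "eps p i \<in> carrier (D p)"
proof -
  have "1 / of_nat p \<in> carrier (Z p)" unfolding carrier_Zp_inf padic_def
    using assms by (auto intro!: exI[of _ 1] exI[of _ 1])
  moreover have "0 \<in> carrier (Z p)" unfolding carrier_Zp_inf using padic_int[of p 0] assms by simp
  moreover have "{j. eps p i j \<noteq> 0} \<subseteq> {i}" by (auto simp: eps_def)
  ultimately show ?thesis using assms carrier_D[of p "eps p i"] finite_subset
    by (auto simp: eps_def)
qed


definition hrel :: "('a,'c) monoid_scheme \<Rightarrow> ('b,'d) monoid_scheme \<Rightarrow> ('a\<times>'b) set \<Rightarrow> bool" where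
  "hrel G H R \<longleftrightarrow> R \<subseteq> carrier G \<times> carrier H \<and> (\<one>\<^bsub>G\<^esub>, \<one>\<^bsub>H\<^esub>) \<in> R \<and>
     (\<forall>x a y b. (x,a)\<in>R \<longrightarrow> (y,b)\<in>R \<longrightarrow> (x \<otimes>\<^bsub>G\<^esub> y, a \<otimes>\<^bsub>H\<^esub> b) \<in> R) \<and>
     (\<forall>x a. (x,a)\<in>R \<longrightarrow> (inv\<^bsub>G\<^esub> x, inv\<^bsub>H\<^esub> a) \<in> R) \<and>
     (\<forall>x a b. (x,a)\<in>R \<longrightarrow> (x,b)\<in>R \<longrightarrow> a = b)"

lemma (in comm_group) cancel1:
  assumes "x \<in> carrier G" "y \<in> carrier G" "u \<in> carrier G" "v \<in> carrier G" "x \<otimes> u = y \<otimes> v"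
  shows "inv x \<otimes> y = u \<otimes> inv v"
proof -
  have "x \<otimes> (u \<otimes> inv v) = (x \<otimes> u) \<otimes> inv v" using assms(1-4) by (simp add: m_assoc)
  also have "\<dots> = (y \<otimes> v) \<otimes> inv v" using assms(5) by simp
  also have "\<dots> = y \<otimes> (v \<otimes> inv v)" using assms(1-4) by (simp add: m_assoc)
  also have "\<dots> = y" using assms by simp
  finally have "x \<otimes> (u \<otimes> inv v) = y" .
  then have "y = x \<otimes> (u \<otimes> inv v)" by (rule sym)
  then show ?thesis using inv_solve_left'[of "u \<otimes> inv v" x y] assms by simp
qed

lemma (in comm_group) cancel2:
  assumes "x \<in> carrier G" "y \<in> carrier G" "u \<in> carrier G" "v \<in> carrier G" "inv x \<otimes> y = u \<otimes> inv v"
  shows "x \<otimes> u = y \<otimes> v"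
proof -
  have y: "y = x \<otimes> (u \<otimes> inv v)" using inv_solve_left'[of "u \<otimes> inv v" x y] assms by blast
  have "y \<otimes> v = x \<otimes> (u \<otimes> inv v) \<otimes> v" using y by simp
  also have "\<dots> = x \<otimes> u \<otimes> (inv v \<otimes> v)" using assms(1-4) by (simp add: m_assoc)
  also have "\<dots> = x \<otimes> u" using assms by simp
  finally show ?thesis by (rule sym)
qed

locale two_cgroups = G: comm_group G + H: comm_group H for G and H
begin

lemma hrel_sub: "hrel G H R \<Longrightarrow> (x,a) \<in> R \<Longrightarrow> x \<in> carrier G \<and> a \<in> carrier H"
  unfolding hrel_def by (elim conjE) (drule (1) subsetD, simp)
lemma hrel_one: "hrel G H R \<Longrightarrow> (\<one>\<^bsub>G\<^esub>, \<one>\<^bsub>H\<^esub>) \<in> R"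
  unfolding hrel_def by (elim conjE)
lemma hrel_mult: "hrel G H R \<Longrightarrow> (x,a) \<in> R \<Longrightarrow> (y,b) \<in> R \<Longrightarrow> (x \<otimes>\<^bsub>G\<^esub> y, a \<otimes>\<^bsub>H\<^esub> b) \<in> R"
  by (simp add: hrel_def)
lemma hrel_inv: "hrel G H R \<Longrightarrow> (x,a) \<in> R \<Longrightarrow> (inv\<^bsub>G\<^esub> x, inv\<^bsub>H\<^esub> a) \<in> R"
  by (simp add: hrel_def)
lemma hrel_uniq: "hrel G H R \<Longrightarrow> (x,a) \<in> R \<Longrightarrow> (x,b) \<in> R \<Longrightarrow> a = b"
  by (simp add: hrel_def)

lemma hrel_nat_pow: assumes "hrel G H R" "(x,a) \<in> R" shows "(x [^]\<^bsub>G\<^esub> (n::nat), a [^]\<^bsub>H\<^esub> n) \<in> R"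
proof (induction n)
  case 0 show ?case by (simp only: nat_pow_0) (rule hrel_one[OF assms(1)])
next
  case (Suc n)
  have "(x [^]\<^bsub>G\<^esub> n \<otimes>\<^bsub>G\<^esub> x, a [^]\<^bsub>H\<^esub> n \<otimes>\<^bsub>H\<^esub> a) \<in> R" by (rule hrel_mult[OF assms(1) Suc assms(2)])
  then show ?case by (simp only: nat_pow_Suc)
qed

lemma hrel_int_pow: assumes "hrel G H R" "(x,a) \<in> R" shows "(x [^]\<^bsub>G\<^esub> (k::int), a [^]\<^bsub>H\<^esub> k) \<in> R"
proof (cases "k < 0")
  case True
  have "(inv\<^bsub>G\<^esub> (x [^]\<^bsub>G\<^esub> nat (-k)), inv\<^bsub>H\<^esub> (a [^]\<^bsub>H\<^esub> nat (-k))) \<in> R"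
    by (rule hrel_inv[OF assms(1) hrel_nat_pow[OF assms]])
  then show ?thesis using True by (simp only: int_pow_def2 if_True)
next
  case False
  have "(x [^]\<^bsub>G\<^esub> nat k, a [^]\<^bsub>H\<^esub> nat k) \<in> R" by (rule hrel_nat_pow[OF assms])
  then show ?thesis using False by (simp only: int_pow_def2 if_False)
qed

definition ext where
  "ext R g e = {(x \<otimes>\<^bsub>G\<^esub> g [^]\<^bsub>G\<^esub> (k::int), a \<otimes>\<^bsub>H\<^esub> e [^]\<^bsub>H\<^esub> k) | x a k. (x,a) \<in> R}"

lemma ext_mem: "(x,a) \<in> R \<Longrightarrow> (x \<otimes>\<^bsub>G\<^esub> g [^]\<^bsub>G\<^esub> (k::int), a \<otimes>\<^bsub>H\<^esub> e [^]\<^bsub>H\<^esub> k) \<in> ext R g e"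
  unfolding ext_def by blast

lemma ext_sub: assumes "hrel G H R" "g \<in> carrier G" "e \<in> carrier H" shows "R \<subseteq> ext R g e"
proof
  fix z assume "z \<in> R"
  then obtain x a where z: "z = (x,a)" "(x,a) \<in> R" by (cases z) auto
  have "x \<in> carrier G" "a \<in> carrier H" using hrel_sub[OF assms(1) z(2)] by auto
  then have "(x \<otimes>\<^bsub>G\<^esub> g [^]\<^bsub>G\<^esub> (0::int), a \<otimes>\<^bsub>H\<^esub> e [^]\<^bsub>H\<^esub> (0::int)) = (x, a)" by simp
  then show "z \<in> ext R g e" using ext_mem[OF z(2), of g 0 e] z(1) by simp
qed

lemma ext_ge: assumes "hrel G H R" "g \<in> carrier G" "e \<in> carrier H" shows "(g, e) \<in> ext R g e"
proof -
  have "(\<one>\<^bsub>G\<^esub> \<otimes>\<^bsub>G\<^esub> g [^]\<^bsub>G\<^esub> (1::int), \<one>\<^bsub>H\<^esub> \<otimes>\<^bsub>H\<^esub> e [^]\<^bsub>H\<^esub> (1::int)) = (g, e)" using assms by simp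
  then show ?thesis using ext_mem[OF hrel_one[OF assms(1)], of g 1 e] by simp
qed

lemma ext_hrel:
  assumes R: "hrel G H R" and g: "g \<in> carrier G" and e: "e \<in> carrier H"
    and cond: "\<And>k::int. g [^]\<^bsub>G\<^esub> k \<in> Domain R \<Longrightarrow> (g [^]\<^bsub>G\<^esub> k, e [^]\<^bsub>H\<^esub> k) \<in> R"
  shows "hrel G H (ext R g e)"
  unfolding hrel_def
proof (intro conjI allI impI)
  show "ext R g e \<subseteq> carrier G \<times> carrier H"
    using hrel_sub[OF R] g e unfolding ext_def by auto
  show "(\<one>\<^bsub>G\<^esub>, \<one>\<^bsub>H\<^esub>) \<in> ext R g e"
    using ext_sub[OF R g e] hrel_one[OF R] by blast
next
  fix x1 a1 x2 a2 assume "(x1, a1) \<in> ext R g e" "(x2, a2) \<in> ext R g e"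
  then obtain x a k y b l where 1: "x1 = x \<otimes>\<^bsub>G\<^esub> g [^]\<^bsub>G\<^esub> (k::int)" "a1 = a \<otimes>\<^bsub>H\<^esub> e [^]\<^bsub>H\<^esub> k" "(x,a) \<in> R"
    and 2: "x2 = y \<otimes>\<^bsub>G\<^esub> g [^]\<^bsub>G\<^esub> (l::int)" "a2 = b \<otimes>\<^bsub>H\<^esub> e [^]\<^bsub>H\<^esub> l" "(y,b) \<in> R"
    unfolding ext_def by blast
  have c: "x \<in> carrier G" "a \<in> carrier H" "y \<in> carrier G" "b \<in> carrier H"
    using hrel_sub[OF R 1(3)] hrel_sub[OF R 2(3)] by auto
  have "x1 \<otimes>\<^bsub>G\<^esub> x2 = (x \<otimes>\<^bsub>G\<^esub> y) \<otimes>\<^bsub>G\<^esub> g [^]\<^bsub>G\<^esub> (k + l)"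
    using c g by (simp add: 1 2 G.int_pow_mult G.m_ac)
  moreover have "a1 \<otimes>\<^bsub>H\<^esub> a2 = (a \<otimes>\<^bsub>H\<^esub> b) \<otimes>\<^bsub>H\<^esub> e [^]\<^bsub>H\<^esub> (k + l)"
    using c e by (simp add: 1 2 H.int_pow_mult H.m_ac)
  ultimately show "(x1 \<otimes>\<^bsub>G\<^esub> x2, a1 \<otimes>\<^bsub>H\<^esub> a2) \<in> ext R g e"
    using ext_mem[OF hrel_mult[OF R 1(3) 2(3)], of g "k+l" e] by simp
next
  fix x1 a1 assume "(x1, a1) \<in> ext R g e"
  then obtain x a k where 1: "x1 = x \<otimes>\<^bsub>G\<^esub> g [^]\<^bsub>G\<^esub> (k::int)" "a1 = a \<otimes>\<^bsub>H\<^esub> e [^]\<^bsub>H\<^esub> k" "(x,a) \<in> R"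
    unfolding ext_def by blast
  have c: "x \<in> carrier G" "a \<in> carrier H" using hrel_sub[OF R 1(3)] by auto
  have "inv\<^bsub>G\<^esub> x1 = inv\<^bsub>G\<^esub> x \<otimes>\<^bsub>G\<^esub> g [^]\<^bsub>G\<^esub> (- k)" using c g by (simp add: 1 G.inv_mult G.int_pow_neg)
  moreover have "inv\<^bsub>H\<^esub> a1 = inv\<^bsub>H\<^esub> a \<otimes>\<^bsub>H\<^esub> e [^]\<^bsub>H\<^esub> (- k)" using c e by (simp add: 1 H.inv_mult H.int_pow_neg)
  ultimately show "(inv\<^bsub>G\<^esub> x1, inv\<^bsub>H\<^esub> a1) \<in> ext R g e"
    using ext_mem[OF hrel_inv[OF R 1(3)], of g "-k" e] by simp
next
  fix x1 a1 a2 assume "(x1, a1) \<in> ext R g e" "(x1, a2) \<in> ext R g e"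
  then obtain x a k y b l where 1: "x1 = x \<otimes>\<^bsub>G\<^esub> g [^]\<^bsub>G\<^esub> (k::int)" "a1 = a \<otimes>\<^bsub>H\<^esub> e [^]\<^bsub>H\<^esub> k" "(x,a) \<in> R"
    and 2: "x1 = y \<otimes>\<^bsub>G\<^esub> g [^]\<^bsub>G\<^esub> (l::int)" "a2 = b \<otimes>\<^bsub>H\<^esub> e [^]\<^bsub>H\<^esub> l" "(y,b) \<in> R"
    unfolding ext_def by blast
  have c: "x \<in> carrier G" "a \<in> carrier H" "y \<in> carrier G" "b \<in> carrier H"
    using hrel_sub[OF R 1(3)] hrel_sub[OF R 2(3)] by auto
  have "inv\<^bsub>G\<^esub> x \<otimes>\<^bsub>G\<^esub> y = g [^]\<^bsub>G\<^esub> k \<otimes>\<^bsub>G\<^esub> inv\<^bsub>G\<^esub> (g [^]\<^bsub>G\<^esub> l)"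
    using G.cancel1[of x y "g [^]\<^bsub>G\<^esub> k" "g [^]\<^bsub>G\<^esub> l"] c g 1(1) 2(1) by simp
  also have "\<dots> = g [^]\<^bsub>G\<^esub> (k - l)" using g by (simp add: G.int_pow_diff)
  finally have eq: "inv\<^bsub>G\<^esub> x \<otimes>\<^bsub>G\<^esub> y = g [^]\<^bsub>G\<^esub> (k - l)" .
  have R1: "(inv\<^bsub>G\<^esub> x \<otimes>\<^bsub>G\<^esub> y, inv\<^bsub>H\<^esub> a \<otimes>\<^bsub>H\<^esub> b) \<in> R" using hrel_mult[OF R hrel_inv[OF R 1(3)] 2(3)] .
  then have "g [^]\<^bsub>G\<^esub> (k - l) \<in> Domain R" using eq by (metis Domain.DomainI)
  then have "(g [^]\<^bsub>G\<^esub> (k - l), e [^]\<^bsub>H\<^esub> (k - l)) \<in> R" by (rule cond)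
  then have "inv\<^bsub>H\<^esub> a \<otimes>\<^bsub>H\<^esub> b = e [^]\<^bsub>H\<^esub> (k - l)" using hrel_uniq[OF R] R1 eq by metis
  also have "\<dots> = e [^]\<^bsub>H\<^esub> k \<otimes>\<^bsub>H\<^esub> inv\<^bsub>H\<^esub> (e [^]\<^bsub>H\<^esub> l)" using e by (simp add: H.int_pow_diff)
  finally have "a \<otimes>\<^bsub>H\<^esub> e [^]\<^bsub>H\<^esub> k = b \<otimes>\<^bsub>H\<^esub> e [^]\<^bsub>H\<^esub> l"
    using H.cancel2[of a b "e [^]\<^bsub>H\<^esub> k" "e [^]\<^bsub>H\<^esub> l"] c e by simp
  then show "a1 = a2" using 1 2 by simp
qed

lemma chain_hrel:
  assumes "C \<noteq> {}" "\<And>R. R \<in> C \<Longrightarrow> hrel G H R" "\<And>R S. R \<in> C \<Longrightarrow> S \<in> C \<Longrightarrow> R \<subseteq> S \<or> S \<subseteq> R"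
  shows "hrel G H (\<Union>C)"
proof -
  have two: "\<exists>R\<in>C. z \<in> R \<and> w \<in> R" if zw: "z \<in> \<Union>C" "w \<in> \<Union>C" for z w
  proof -
    obtain R S where "R \<in> C" "S \<in> C" "z \<in> R" "w \<in> S" using zw by blast
    then show ?thesis using assms(3)[of R S] by blast
  qed
  show ?thesis unfolding hrel_def
  proof (intro conjI allI impI)
    show "\<Union>C \<subseteq> carrier G \<times> carrier H" using assms(2) unfolding hrel_def by blast
    obtain R where "R \<in> C" using assms(1) by blast
    then show "(\<one>\<^bsub>G\<^esub>, \<one>\<^bsub>H\<^esub>) \<in> \<Union>C" using hrel_one[OF assms(2)] by blast
  next
    fix x a y b assume "(x,a) \<in> \<Union>C" "(y,b) \<in> \<Union>C"
    then obtain R where "R \<in> C" "(x,a) \<in> R" "(y,b) \<in> R" using two by blast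
    then show "(x \<otimes>\<^bsub>G\<^esub> y, a \<otimes>\<^bsub>H\<^esub> b) \<in> \<Union>C" using hrel_mult[OF assms(2)] by blast
  next
    fix x a assume "(x,a) \<in> \<Union>C"
    then obtain R where "R \<in> C" "(x,a) \<in> R" by blast
    then show "(inv\<^bsub>G\<^esub> x, inv\<^bsub>H\<^esub> a) \<in> \<Union>C" using hrel_inv[OF assms(2)] by blast
  next
    fix x a b assume "(x,a) \<in> \<Union>C" "(x,b) \<in> \<Union>C"
    then obtain R where "R \<in> C" "(x,a) \<in> R" "(x,b) \<in> R" using two by blast
    then show "a = b" using hrel_uniq[OF assms(2)] by blast
  qed
qed

end


context two_cgroups begin

lemma dom_mult: assumes "hrel G H M" "x \<in> Domain M" "y \<in> Domain M" shows "x \<otimes>\<^bsub>G\<^esub> y \<in> Domain M"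
proof -
  obtain a b where "(x,a) \<in> M" "(y,b) \<in> M" using assms(2,3) by (elim DomainE)
  then show ?thesis by (rule DomainI[OF hrel_mult[OF assms(1)]])
qed
lemma dom_inv: assumes "hrel G H M" "x \<in> Domain M" shows "inv\<^bsub>G\<^esub> x \<in> Domain M"
proof -
  obtain a where "(x,a) \<in> M" using assms(2) by (elim DomainE)
  then show ?thesis by (rule DomainI[OF hrel_inv[OF assms(1)]])
qed
lemma dom_pow: assumes "hrel G H M" "x \<in> Domain M" shows "x [^]\<^bsub>G\<^esub> (k::int) \<in> Domain M"
proof -
  obtain a where "(x,a) \<in> M" using assms(2) by (elim DomainE)
  then show ?thesis by (rule DomainI[OF hrel_int_pow[OF assms(1)]])
qed
lemma dom_sub: assumes "hrel G H M" "x \<in> Domain M" shows "x \<in> carrier G"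
proof -
  obtain a where "(x,a) \<in> M" using assms(2) by (elim DomainE)
  then show ?thesis using hrel_sub[OF assms(1)] by simp
qed

lemma rv1:
  assumes M: "hrel G H M" and g: "g \<in> carrier G"
    and F: "\<not> (\<exists>n::nat. n > 0 \<and> g [^]\<^bsub>G\<^esub> n \<in> Domain M)"
    and k: "g [^]\<^bsub>G\<^esub> (k::int) \<in> Domain M"
  shows "k = 0"
proof (rule ccontr)
  assume "k \<noteq> 0"
  then consider "k > 0" | "k < 0" by linarith
  then show False
  proof cases
    case 1
    then have "g [^]\<^bsub>G\<^esub> k = g [^]\<^bsub>G\<^esub> (nat k)" using int_pow_int[of G g "nat k"] by simp
    then have "g [^]\<^bsub>G\<^esub> (nat k) \<in> Domain M" using k by simp
    moreover have "nat k > 0" using 1 by simp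
    ultimately show False using F by blast
  next
    case 2
    then have "g [^]\<^bsub>G\<^esub> (- k) = g [^]\<^bsub>G\<^esub> (nat (-k))" using int_pow_int[of G g "nat (-k)"] by simp
    moreover have "g [^]\<^bsub>G\<^esub> (- k) \<in> Domain M"
    proof -
      have "(g [^]\<^bsub>G\<^esub> k) [^]\<^bsub>G\<^esub> (-1::int) = g [^]\<^bsub>G\<^esub> (k * -1)" by (rule G.int_pow_pow[OF g])
      then show ?thesis using dom_pow[OF M k, of "-1"] by simp
    qed
    ultimately have "g [^]\<^bsub>G\<^esub> (nat (-k)) \<in> Domain M" by simp
    moreover have "nat (-k) > 0" using 2 by simp
    ultimately show False using F by blast
  qed
qed

lemma rv2:
  assumes M: "hrel G H M" and g: "g \<in> carrier G"
    and n0: "n0 > 0" "g [^]\<^bsub>G\<^esub> n0 \<in> Domain M"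
    and n0min: "\<And>m::nat. 0 < m \<Longrightarrow> m < n0 \<Longrightarrow> g [^]\<^bsub>G\<^esub> m \<notin> Domain M"
    and d: "(g [^]\<^bsub>G\<^esub> n0, d) \<in> M" and e: "e \<in> carrier H" "e [^]\<^bsub>H\<^esub> n0 = d"
    and k: "g [^]\<^bsub>G\<^esub> (k::int) \<in> Domain M"
  shows "(g [^]\<^bsub>G\<^esub> k, e [^]\<^bsub>H\<^esub> k) \<in> M"
proof -
  define q where "q = k div int n0"
  define r where "r = k mod int n0"
  have kqr: "k = int n0 * q + r" unfolding q_def r_def by simp
  have r: "0 \<le> r" "r < int n0" unfolding r_def using n0(1) by simp_all
  have pw: "(g [^]\<^bsub>G\<^esub> n0) [^]\<^bsub>G\<^esub> q = g [^]\<^bsub>G\<^esub> (int n0 * q)"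
    using G.int_pow_pow[OF g, of "int n0" q] by (simp only: int_pow_int)
  have "g [^]\<^bsub>G\<^esub> k = g [^]\<^bsub>G\<^esub> (int n0 * q) \<otimes>\<^bsub>G\<^esub> g [^]\<^bsub>G\<^esub> r"
    using G.int_pow_mult[OF g, of "int n0 * q" r] kqr by simp
  then have A: "g [^]\<^bsub>G\<^esub> k = (g [^]\<^bsub>G\<^esub> n0) [^]\<^bsub>G\<^esub> q \<otimes>\<^bsub>G\<^esub> g [^]\<^bsub>G\<^esub> r"
    by (simp only: pw)
  have c1: "(g [^]\<^bsub>G\<^esub> n0) [^]\<^bsub>G\<^esub> q \<in> carrier G" "g [^]\<^bsub>G\<^esub> r \<in> carrier G" "g [^]\<^bsub>G\<^esub> k \<in> carrier G"
    using g by simp_all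
  have "g [^]\<^bsub>G\<^esub> r = inv\<^bsub>G\<^esub> ((g [^]\<^bsub>G\<^esub> n0) [^]\<^bsub>G\<^esub> q) \<otimes>\<^bsub>G\<^esub> g [^]\<^bsub>G\<^esub> k"
    using G.inv_solve_left[OF c1(2) c1(1) c1(3)] A by blast
  moreover have "inv\<^bsub>G\<^esub> ((g [^]\<^bsub>G\<^esub> n0) [^]\<^bsub>G\<^esub> q) \<otimes>\<^bsub>G\<^esub> g [^]\<^bsub>G\<^esub> k \<in> Domain M"
    by (rule dom_mult[OF M dom_inv[OF M dom_pow[OF M n0(2)]] k])
  ultimately have gr: "g [^]\<^bsub>G\<^esub> r \<in> Domain M" by simp
  have "r = 0"
  proof (rule ccontr)
    assume "r \<noteq> 0"
    then have "0 < nat r" "nat r < n0" using r by auto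
    moreover have "g [^]\<^bsub>G\<^esub> (nat r) = g [^]\<^bsub>G\<^esub> r" using r int_pow_int[of G g "nat r"] by simp
    ultimately show False using n0min[of "nat r"] gr by simp
  qed
  then have kk: "k = int n0 * q" using kqr by simp
  then have k2: "g [^]\<^bsub>G\<^esub> k = (g [^]\<^bsub>G\<^esub> n0) [^]\<^bsub>G\<^esub> q"
    using pw by simp
  have "(e [^]\<^bsub>H\<^esub> n0) [^]\<^bsub>H\<^esub> q = e [^]\<^bsub>H\<^esub> (int n0 * q)"
    using H.int_pow_pow[OF e(1), of "int n0" q] by (simp only: int_pow_int)
  then have e2: "e [^]\<^bsub>H\<^esub> k = d [^]\<^bsub>H\<^esub> q"
    using e(2) kk by simp
  show ?thesis using hrel_int_pow[OF M d, of q] k2 e2 by simp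
qed

lemma root_value:
  assumes M: "hrel G H M" and g: "g \<in> carrier G"
    and div: "\<And>y n. y \<in> carrier H \<Longrightarrow> n > (0::nat) \<Longrightarrow> \<exists>e\<in>carrier H. e [^]\<^bsub>H\<^esub> n = y"
  shows "\<exists>e\<in>carrier H. \<forall>k::int. g [^]\<^bsub>G\<^esub> k \<in> Domain M \<longrightarrow> (g [^]\<^bsub>G\<^esub> k, e [^]\<^bsub>H\<^esub> k) \<in> M"
proof (cases "\<exists>n::nat. n > 0 \<and> g [^]\<^bsub>G\<^esub> n \<in> Domain M")
  case False
  have "(g [^]\<^bsub>G\<^esub> k, \<one>\<^bsub>H\<^esub> [^]\<^bsub>H\<^esub> k) \<in> M" if k: "g [^]\<^bsub>G\<^esub> (k::int) \<in> Domain M" for k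
  proof -
    have "k = 0" by (rule rv1[OF M g False k])
    then show ?thesis using hrel_one[OF M] by simp
  qed
  then have "\<forall>k::int. g [^]\<^bsub>G\<^esub> k \<in> Domain M \<longrightarrow> (g [^]\<^bsub>G\<^esub> k, \<one>\<^bsub>H\<^esub> [^]\<^bsub>H\<^esub> k) \<in> M" by (intro allI impI)
  then show ?thesis using H.one_closed by (rule bexI)
next
  case True
  define n0 where "n0 = (LEAST n::nat. n > 0 \<and> g [^]\<^bsub>G\<^esub> n \<in> Domain M)"
  have n0: "n0 > 0 \<and> g [^]\<^bsub>G\<^esub> n0 \<in> Domain M"
    unfolding n0_def by (rule LeastI_ex[OF True])
  have n0min: "\<And>m::nat. 0 < m \<Longrightarrow> m < n0 \<Longrightarrow> g [^]\<^bsub>G\<^esub> m \<notin> Domain M"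
    unfolding n0_def using not_less_Least by blast
  obtain d where d: "(g [^]\<^bsub>G\<^esub> n0, d) \<in> M" using conjunct2[OF n0] by (rule DomainE)
  have dc: "d \<in> carrier H" using hrel_sub[OF M d] by simp
  obtain e where e: "e \<in> carrier H" "e [^]\<^bsub>H\<^esub> n0 = d" using div[OF dc conjunct1[OF n0]] by blast
  have "\<forall>k::int. g [^]\<^bsub>G\<^esub> k \<in> Domain M \<longrightarrow> (g [^]\<^bsub>G\<^esub> k, e [^]\<^bsub>H\<^esub> k) \<in> M"
  proof (intro allI impI)
    fix k :: int assume kD: "g [^]\<^bsub>G\<^esub> k \<in> Domain M"
    show "(g [^]\<^bsub>G\<^esub> k, e [^]\<^bsub>H\<^esub> k) \<in> M"
      by (rule rv2[OF M g conjunct1[OF n0] conjunct2[OF n0] n0min d e(1) e(2) kD])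
  qed
  then show ?thesis using e(1) by (rule bexI)
qed

lemma extend_hom:
  assumes div: "\<And>y n. y \<in> carrier H \<Longrightarrow> n > (0::nat) \<Longrightarrow> \<exists>e\<in>carrier H. e [^]\<^bsub>H\<^esub> n = y"
    and R0: "hrel G H R0"
  shows "\<exists>h\<in>hom G H. \<forall>x a. (x,a) \<in> R0 \<longrightarrow> h x = a"
proof -
  define A where "A = {R. hrel G H R \<and> R0 \<subseteq> R}"
  have R0A: "R0 \<in> A" unfolding A_def using R0 by simp
  have "\<forall>CC\<in>chains A. \<exists>UU\<in>A. \<forall>XX\<in>CC. XX \<subseteq> UU"
  proof
    fix C assume C: "C \<in> chains A"
    have CA: "C \<subseteq> A" using C unfolding chains_def by simp
    have ch: "\<And>R S. R \<in> C \<Longrightarrow> S \<in> C \<Longrightarrow> R \<subseteq> S \<or> S \<subseteq> R"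
      using C unfolding chains_def chain_subset_def by simp
    show "\<exists>UU\<in>A. \<forall>XX\<in>C. XX \<subseteq> UU"
    proof (cases "C = {}")
      case True
      have "\<forall>XX\<in>C. XX \<subseteq> R0" using True by simp
      then show ?thesis using R0A by (rule bexI)
    next
      case False
      have hC: "\<And>R. R \<in> C \<Longrightarrow> hrel G H R" using CA unfolding A_def by auto
      have "hrel G H (\<Union>C)" by (rule chain_hrel[OF False hC ch])
      moreover obtain R1 where "R1 \<in> C" using False by auto
      then have "R0 \<subseteq> \<Union>C" using CA unfolding A_def by auto
      ultimately have UA: "\<Union>C \<in> A" unfolding A_def by simp
      have "\<forall>XX\<in>C. XX \<subseteq> \<Union>C" by auto
      then show ?thesis using UA by (rule bexI)
    qed
  qed
  from Zorn_Lemma2[OF this] obtain M where MA: "M \<in> A" and Mmax0: "\<forall>Y\<in>A. M \<subseteq> Y \<longrightarrow> Y = M"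
    by (elim bexE)
  have M: "hrel G H M" and R0M: "R0 \<subseteq> M" using MA unfolding A_def by auto
  have dom: "Domain M = carrier G"
  proof
    show "Domain M \<subseteq> carrier G"
    proof
      fix x assume "x \<in> Domain M" then show "x \<in> carrier G" by (rule dom_sub[OF M])
    qed
    show "carrier G \<subseteq> Domain M"
    proof
      fix g assume g: "g \<in> carrier G"
      show "g \<in> Domain M"
      proof (rule ccontr)
        assume gn: "g \<notin> Domain M"
        obtain e where e: "e \<in> carrier H"
          and cond0: "\<forall>k::int. g [^]\<^bsub>G\<^esub> k \<in> Domain M \<longrightarrow> (g [^]\<^bsub>G\<^esub> k, e [^]\<^bsub>H\<^esub> k) \<in> M"
        proof -
          have "\<exists>e\<in>carrier H. \<forall>k::int. g [^]\<^bsub>G\<^esub> k \<in> Domain M \<longrightarrow> (g [^]\<^bsub>G\<^esub> k, e [^]\<^bsub>H\<^esub> k) \<in> M"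
            by (rule root_value[OF M g]) (rule div; assumption)
          then show ?thesis using that by (elim bexE)
        qed
        have cond: "\<And>k::int. g [^]\<^bsub>G\<^esub> k \<in> Domain M \<Longrightarrow> (g [^]\<^bsub>G\<^esub> k, e [^]\<^bsub>H\<^esub> k) \<in> M"
          using cond0 by simp
        have "hrel G H (ext M g e)" by (rule ext_hrel[OF M g e cond])
        moreover have sub: "M \<subseteq> ext M g e" by (rule ext_sub[OF M g e])
        ultimately have "ext M g e \<in> A" using R0M unfolding A_def by auto
        then have "ext M g e = M" using Mmax0 sub by simp
        then have "(g, e) \<in> M" using ext_ge[OF M g e] by simp
        then have "g \<in> Domain M" by (rule DomainI)
        then show False using gn by simp
      qed
    qed
  qed
  define h where "h x = (THE a. (x,a) \<in> M)" for x
  have hx: "(x, h x) \<in> M" if x: "x \<in> carrier G" for x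
  proof -
    have "x \<in> Domain M" using x dom by simp
    then obtain a where a: "(x,a) \<in> M" by (rule DomainE)
    have "(THE a. (x,a) \<in> M) = a"
    proof (rule the_equality)
      show "(x,a) \<in> M" by (rule a)
      fix b assume "(x,b) \<in> M" then show "b = a" using hrel_uniq[OF M a] by simp
    qed
    then show ?thesis using a unfolding h_def by simp
  qed
  have hom: "h \<in> hom G H"
  proof (rule homI)
    fix x assume "x \<in> carrier G" then show "h x \<in> carrier H" using hrel_sub[OF M hx] by simp
  next
    fix x y assume x: "x \<in> carrier G" and y: "y \<in> carrier G"
    have 1: "(x \<otimes>\<^bsub>G\<^esub> y, h x \<otimes>\<^bsub>H\<^esub> h y) \<in> M" by (rule hrel_mult[OF M hx[OF x] hx[OF y]])
    have 2: "(x \<otimes>\<^bsub>G\<^esub> y, h (x \<otimes>\<^bsub>G\<^esub> y)) \<in> M" using hx x y by simp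
    show "h (x \<otimes>\<^bsub>G\<^esub> y) = h x \<otimes>\<^bsub>H\<^esub> h y" by (rule hrel_uniq[OF M 2 1])
  qed
  have "\<forall>x a. (x,a) \<in> R0 \<longrightarrow> h x = a"
  proof (intro allI impI)
    fix x a assume "(x,a) \<in> R0"
    then have xa: "(x,a) \<in> M" using R0M by auto
    then have "x \<in> carrier G" using hrel_sub[OF M] by simp
    then show "h x = a" using hrel_uniq[OF M hx xa] by simp
  qed
  then show ?thesis using hom by (intro bexI)
qed

end


lemma finprod_hom:
  assumes G: "comm_group G" and H: "comm_group H" and h: "h \<in> hom G H"
    and A: "finite A" and f: "f \<in> A \<rightarrow> carrier G"
  shows "h (finprod G f A) = finprod H (\<lambda>j. h (f j)) A"
  using A f
proof (induction A rule: finite_induct)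
  case empty
  then show ?case using hom_one[OF h] G H by (simp add: comm_group.axioms(2) comm_monoid.finprod_empty comm_group.axioms(1))
next
  case (insert a A)
  have fa: "f a \<in> carrier G" and fA: "f \<in> A \<rightarrow> carrier G" using insert(4) by auto
  have hA: "(\<lambda>j. h (f j)) \<in> A \<rightarrow> carrier H" using fA h by (auto simp: hom_def)
  have ha: "h (f a) \<in> carrier H" using fa h by (auto simp: hom_def)
  have "finprod G f (insert a A) = f a \<otimes>\<^bsub>G\<^esub> finprod G f A"
    by (rule comm_monoid.finprod_insert[OF comm_group.axioms(1)[OF G] insert(1,2) fA fa])
  moreover have "finprod G f A \<in> carrier G" by (rule comm_monoid.finprod_closed[OF comm_group.axioms(1)[OF G] fA])
  ultimately have "h (finprod G f (insert a A)) = h (f a) \<otimes>\<^bsub>H\<^esub> h (finprod G f A)"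
    using h fa by (simp add: hom_mult)
  also have "\<dots> = h (f a) \<otimes>\<^bsub>H\<^esub> finprod H (\<lambda>j. h (f j)) A" using insert(3)[OF fA] by simp
  also have "\<dots> = finprod H (\<lambda>j. h (f j)) (insert a A)"
    by (rule comm_monoid.finprod_insert[OF comm_group.axioms(1)[OF H] insert(1,2) hA ha, symmetric])
  finally show ?case .
qed

lemma inv_hom_comm: assumes G: "comm_group G" shows "(\<lambda>x. inv\<^bsub>G\<^esub> x) \<in> hom G G"
  unfolding hom_def using G by (auto simp: comm_group.inv_mult comm_group.axioms(2) group.inv_closed)

lemma pow_hom_comm: assumes G: "comm_group G" shows "(\<lambda>x. x [^]\<^bsub>G\<^esub> (n::nat)) \<in> hom G G"
  unfolding hom_def using G
  by (auto simp: comm_monoid.nat_pow_distrib comm_group.axioms(1) monoid.nat_pow_closed comm_monoid.axioms(1))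

lemma finprod_inv:
  assumes G: "comm_group G" and A: "finite A" and f: "f \<in> A \<rightarrow> carrier G"
  shows "finprod G (\<lambda>j. inv\<^bsub>G\<^esub> (f j)) A = inv\<^bsub>G\<^esub> (finprod G f A)"
  using finprod_hom[OF G G inv_hom_comm[OF G] A f] by simp

lemma finprod_pow:
  assumes G: "comm_group G" and A: "finite A" and f: "f \<in> A \<rightarrow> carrier G"
  shows "finprod G (\<lambda>j. (f j) [^]\<^bsub>G\<^esub> (n::nat)) A = (finprod G f A) [^]\<^bsub>G\<^esub> n"
  using finprod_hom[OF G G pow_hom_comm[OF G] A f] by simp


lemma (in comm_group) span_step:
  assumes s: "\<And>j. s j \<in> carrier G"
  shows "finprod G (\<lambda>j. s j [^] (c j :: int)) {..<i} \<otimes> s i [^] (k::int)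
       = finprod G (\<lambda>j. s j [^] ((c(i:=k)) j)) {..<Suc i}"
proof -
  have f1: "(\<lambda>j. s j [^] ((c(i:=k)) j)) \<in> {..<i} \<rightarrow> carrier G" using s by simp
  have "finprod G (\<lambda>j. s j [^] ((c(i:=k)) j)) {..<Suc i}
      = finprod G (\<lambda>j. s j [^] ((c(i:=k)) j)) (insert i {..<i})" by (simp add: lessThan_Suc)
  also have "\<dots> = s i [^] k \<otimes> finprod G (\<lambda>j. s j [^] ((c(i:=k)) j)) {..<i}"
    using finprod_insert[of "{..<i}" i "\<lambda>j. s j [^] ((c(i:=k)) j)"] f1 s by simp
  also have "finprod G (\<lambda>j. s j [^] ((c(i:=k)) j)) {..<i} = finprod G (\<lambda>j. s j [^] (c j)) {..<i}"
    by (rule finprod_cong') (auto simp: s)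
  finally show ?thesis using s by (simp add: m_comm)
qed

lemma (in comm_group) finprod_inv':
  assumes A: "finite A" shows "f \<in> A \<rightarrow> carrier G \<Longrightarrow> finprod G (\<lambda>j. inv (f j)) A = inv (finprod G f A)"
  using A
proof (induction A rule: finite_induct)
  case empty then show ?case by simp
next
  case (insert a A)
  have fa: "f a \<in> carrier G" and fA: "f \<in> A \<rightarrow> carrier G" using insert(4) by auto
  have "finprod G (\<lambda>j. inv (f j)) (insert a A) = inv (f a) \<otimes> finprod G (\<lambda>j. inv (f j)) A"
    using fa fA insert(1,2) by (simp add: Pi_def)
  also have "\<dots> = inv (f a) \<otimes> inv (finprod G f A)" using insert(3)[OF fA] by simp
  also have "\<dots> = inv (f a \<otimes> finprod G f A)" using fa fA by (simp add: inv_mult)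
  also have "f a \<otimes> finprod G f A = finprod G f (insert a A)" using fa fA insert(1,2) by simp
  finally show ?case .
qed

lemma (in comm_group) indep_step:
  fixes s :: "nat \<Rightarrow> 'a"
  assumes CG: "comm_group G" and ind: "ab_independent G S" and inj: "inj s" and sS: "range s \<subseteq> S"
    and eq: "s i [^] (k::int) = finprod G (\<lambda>j. s j [^] (c j :: int)) {..<i}"
  shows "k = 0"
proof -
  have s: "\<And>j. s j \<in> carrier G" using ind sS unfolding ab_independent_def by blast
  define P where "P = finprod G (\<lambda>j. s j [^] (c j :: int)) {..<i}"
  have P: "P \<in> carrier G" unfolding P_def using s by simp
  have "finprod G (\<lambda>j. s j [^] (- c j)) {..<i} = finprod G (\<lambda>j. inv (s j [^] c j)) {..<i}"
    by (rule finprod_cong') (auto simp: s int_pow_neg)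
  also have "\<dots> = inv P" unfolding P_def
    by (rule finprod_inv'[OF finite_lessThan]) (simp add: Pi_def s)
  finally have N: "finprod G (\<lambda>j. s j [^] (- c j)) {..<i} = inv P" .
  define c' where "c' = (\<lambda>j. - c j)(i := k)"
  have "finprod G (\<lambda>j. s j [^] (c' j)) {..<Suc i} = finprod G (\<lambda>j. s j [^] (- c j)) {..<i} \<otimes> s i [^] k"
    unfolding c'_def by (rule span_step[OF s, symmetric])
  also have "\<dots> = \<one>" using N eq P s unfolding P_def by simp
  finally have one: "finprod G (\<lambda>j. s j [^] (c' j)) {..<Suc i} = \<one>" .
  define cc where "cc x = c' (inv_into UNIV s x)" for x
  have "finprod G (\<lambda>x. x [^] cc x) (s ` {..<Suc i}) = finprod G (\<lambda>j. s j [^] cc (s j)) {..<Suc i}"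
    by (rule finprod_reindex) (use s inj in \<open>auto simp: inj_on_def\<close>)
  also have "\<dots> = finprod G (\<lambda>j. s j [^] (c' j)) {..<Suc i}"
    by (rule finprod_cong') (auto simp: s cc_def inv_f_f[OF inj])
  finally have "finprod G (\<lambda>x. x [^] cc x) (s ` {..<Suc i}) = \<one>" using one by simp
  moreover have "s ` {..<Suc i} \<subseteq> S" using sS by auto
  moreover have "finite (s ` {..<Suc i})" by simp
  ultimately have "\<forall>x\<in>s ` {..<Suc i}. cc x = 0" using ind unfolding ab_independent_def by blast
  then have "cc (s i) = 0" by simp
  then show ?thesis by (simp add: cc_def c'_def inv_f_f[OF inj])
qed

lemma hrel_triv: assumes "group G" "group H" shows "hrel G H {(\<one>\<^bsub>G\<^esub>, \<one>\<^bsub>H\<^esub>)}"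
  unfolding hrel_def using assms by (simp add: group.is_monoid monoid.one_closed monoid.inv_one)

theorem backward:
  fixes G :: "('a, 'b) monoid_scheme" and p :: nat
  assumes G: "comm_group G" and p: "Factorial_Ring.prime p" and rk: "infinite_rank G"
  shows "\<exists>h \<in> hom G (D p). h ` carrier G = carrier (D p)"
proof -
  have p0: "p > 0" using p prime_gt_0_nat by blast
  have TG: "two_cgroups G (D p)" by (intro two_cgroups.intro G comm_group_D p0)
  have gG: "group G" using G comm_group.axioms(2) by blast
  have gD: "group (D p)" by (rule group_D[OF p0])
  obtain S where S: "infinite S" "ab_independent G S" using rk unfolding infinite_rank_def by blast
  obtain s :: "nat \<Rightarrow> 'a" where inj: "inj s" and sS: "range s \<subseteq> S"
    using infinite_countable_subset[OF S(1)] by blast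
  have s: "\<And>j. s j \<in> carrier G" using S(2) sS unfolding ab_independent_def by blast
  define d where "d = from_nat_into (carrier (D p))"
  have ne: "carrier (D p) \<noteq> {}" using gD group.is_monoid monoid.one_closed by blast
  have drange: "range d = carrier (D p)" unfolding d_def
    using range_from_nat_into[OF ne countable_carrier_D[OF p0]] .
  have dc: "\<And>i. d i \<in> carrier (D p)" using drange by blast
  define R where "R = rec_nat {(\<one>\<^bsub>G\<^esub>, \<one>\<^bsub>D p\<^esub>)} (\<lambda>i Ri. two_cgroups.ext G (D p) Ri (s i) (d i))"
  have R0: "R 0 = {(\<one>\<^bsub>G\<^esub>, \<one>\<^bsub>D p\<^esub>)}" by (simp add: R_def)
  have RS: "\<And>i. R (Suc i) = two_cgroups.ext G (D p) (R i) (s i) (d i)" by (simp add: R_def)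
  define span where "span i = (\<lambda>c. finprod G (\<lambda>j. s j [^]\<^bsub>G\<^esub> (c j :: int)) {..<i}) ` UNIV" for i
  have inv: "hrel G (D p) (R i) \<and> Domain (R i) \<subseteq> span i" for i
  proof (induction i)
    case 0
    have "\<one>\<^bsub>G\<^esub> = finprod G (\<lambda>j. s j [^]\<^bsub>G\<^esub> (0::int)) {..<0}"
      by (simp add: comm_monoid.finprod_empty[OF comm_group.axioms(1)[OF G]])
    then have "\<one>\<^bsub>G\<^esub> \<in> span 0" unfolding span_def by (rule image_eqI[where x="\<lambda>_. 0", OF _ UNIV_I])
    then have "Domain (R 0) \<subseteq> span 0" unfolding R0 by simp
    then show ?case using hrel_triv[OF gG gD] R0 by simp
  next
    case (Suc i)
    have Ri: "hrel G (D p) (R i)" using Suc by simp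
    have cond: "(s i [^]\<^bsub>G\<^esub> k, d i [^]\<^bsub>D p\<^esub> k) \<in> R i" if k: "s i [^]\<^bsub>G\<^esub> (k::int) \<in> Domain (R i)" for k
    proof -
      have "s i [^]\<^bsub>G\<^esub> k \<in> span i" using k Suc by blast
      then obtain c where "s i [^]\<^bsub>G\<^esub> k = finprod G (\<lambda>j. s j [^]\<^bsub>G\<^esub> (c j :: int)) {..<i}"
        unfolding span_def by blast
      then have "k = 0" by (rule comm_group.indep_step[OF G G S(2) inj sS])
      then show ?thesis using two_cgroups.hrel_one[OF TG Ri] by simp
    qed
    have "hrel G (D p) (R (Suc i))" unfolding RS by (rule two_cgroups.ext_hrel[OF TG Ri s dc cond])
    moreover have "Domain (R (Suc i)) \<subseteq> span (Suc i)"
    proof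
      fix z assume "z \<in> Domain (R (Suc i))"
      then obtain b where "(z, b) \<in> two_cgroups.ext G (D p) (R i) (s i) (d i)" unfolding RS by (elim DomainE)
      then obtain x a k where z: "z = x \<otimes>\<^bsub>G\<^esub> s i [^]\<^bsub>G\<^esub> (k::int)" and xa: "(x,a) \<in> R i"
        unfolding two_cgroups.ext_def[OF TG] by blast
      have "x \<in> Domain (R i)" using xa by (rule DomainI)
      then have "x \<in> span i" using Suc by blast
      then obtain c where x: "x = finprod G (\<lambda>j. s j [^]\<^bsub>G\<^esub> (c j :: int)) {..<i}"
        unfolding span_def by blast
      have "z = finprod G (\<lambda>j. s j [^]\<^bsub>G\<^esub> ((c(i:=k)) j)) {..<Suc i}"
        unfolding z x by (rule comm_group.span_step[OF G s])
      then show "z \<in> span (Suc i)" unfolding span_def by (rule image_eqI[where x="c(i:=k)", OF _ UNIV_I])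
    qed
    ultimately show ?case by simp
  qed
  have mono1: "R i \<subseteq> R (Suc i)" for i
    unfolding RS by (rule two_cgroups.ext_sub[OF TG conjunct1[OF inv] s dc])
  have mono: "R i \<subseteq> R j" if "i \<le> j" for i j
    using lift_Suc_mono_le[of R, OF mono1 that] .
  have sd: "(s i, d i) \<in> R (Suc i)" for i
    unfolding RS by (rule two_cgroups.ext_ge[OF TG conjunct1[OF inv] s dc])
  have hU: "hrel G (D p) (\<Union>(range R))"
  proof (rule two_cgroups.chain_hrel[OF TG])
    show "range R \<noteq> {}" by simp
    show "\<And>Q. Q \<in> range R \<Longrightarrow> hrel G (D p) Q" using inv by blast
    show "\<And>Q T. Q \<in> range R \<Longrightarrow> T \<in> range R \<Longrightarrow> Q \<subseteq> T \<or> T \<subseteq> Q"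
    proof -
      fix Q T assume "Q \<in> range R" "T \<in> range R"
      then obtain i j where "Q = R i" "T = R j" by blast
      then show "Q \<subseteq> T \<or> T \<subseteq> Q" using mono[of i j] mono[of j i] by (cases "i \<le> j") auto
    qed
  qed
  have "\<exists>h\<in>hom G (D p). \<forall>x a. (x,a) \<in> \<Union>(range R) \<longrightarrow> h x = a"
    by (rule two_cgroups.extend_hom[OF TG _ hU]) (rule D_divisible[OF p]; assumption)
  then obtain h where h: "h \<in> hom G (D p)" and hR: "\<forall>x a. (x,a) \<in> \<Union>(range R) \<longrightarrow> h x = a"
    by (elim bexE)
  have hs: "h (s i) = d i" for i using hR sd[of i] by blast
  have "h ` carrier G = carrier (D p)"
  proof
    show "h ` carrier G \<subseteq> carrier (D p)" using h by (auto simp: hom_def)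
    show "carrier (D p) \<subseteq> h ` carrier G"
    proof
      fix y assume "y \<in> carrier (D p)"
      then obtain i where "y = d i" using drange by (metis rangeE)
      then have "y = h (s i)" by (simp add: hs)
      then show "y \<in> h ` carrier G" using s by blast
    qed
  qed
  then show ?thesis using h by blast
qed


lemma rel_dvd:
  fixes G :: "('a, 'b) monoid_scheme" and x :: "nat \<Rightarrow> 'a"
  assumes G: "comm_group G" and p1: "p > 1" and h: "h \<in> hom G (D p)"
    and hx: "\<And>i. h (x i) = eps p i" and xc: "\<And>i. x i \<in> carrier G" and inj: "inj x"
    and F: "finite F" and FS: "F \<subseteq> range x"
    and rel: "finprod G (\<lambda>y. y [^]\<^bsub>G\<^esub> (c y :: int)) F = \<one>\<^bsub>G\<^esub>" and y0: "x j \<in> F"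
  shows "int p dvd c (x j)"
proof -
  have p0: "p > 0" using p1 by simp
  define \<phi> where "\<phi> z = h z j" for z
  have "(\<lambda>z. z j) \<circ> h \<in> hom G (Z p)" by (rule hom_compose[OF h proj_hom[OF p0]])
  then have phom: "\<phi> \<in> hom G (Z p)" unfolding \<phi>_def by (simp add: comp_def)
  have gG: "group G" using G comm_group.axioms(2) by blast
  have cZ: "comm_group (Z p)" by (rule comm_group_Zp_inf[OF p0])
  have gZ: "group (Z p)" by (rule group_Zp[OF p0])
  have f1: "(\<lambda>y. y [^]\<^bsub>G\<^esub> (c y :: int)) \<in> F \<rightarrow> carrier G"
    using FS xc gG by (auto simp: group.int_pow_closed)
  have "\<phi> (finprod G (\<lambda>y. y [^]\<^bsub>G\<^esub> (c y :: int)) F) = finprod (Z p) (\<lambda>y. \<phi> (y [^]\<^bsub>G\<^esub> (c y :: int))) F"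
    by (rule finprod_hom[OF G cZ phom F f1])
  moreover have "\<phi> (finprod G (\<lambda>y. y [^]\<^bsub>G\<^esub> (c y :: int)) F) = \<one>\<^bsub>Z p\<^esub>"
    unfolding rel by (rule hom_one[OF phom gG gZ])
  ultimately have eq1: "finprod (Z p) (\<lambda>y. \<phi> (y [^]\<^bsub>G\<^esub> (c y :: int))) F = \<one>\<^bsub>Z p\<^esub>" by simp
  have ip: "1 / of_nat p \<in> carrier (Z p)" unfolding carrier_Zp_inf padic_def
    using p1 by (auto intro!: exI[of _ 1] exI[of _ 1])
  define f where "f y = (1 / of_nat p) [^]\<^bsub>Z p\<^esub> (c y)" for y
  have fc: "f \<in> F \<rightarrow> carrier (Z p)" unfolding f_def using ip gZ by (auto simp: group.int_pow_closed)
  have "finprod (Z p) (\<lambda>y. \<phi> (y [^]\<^bsub>G\<^esub> (c y :: int))) F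
      = finprod (Z p) (\<lambda>y. if y = x j then f y else \<one>\<^bsub>Z p\<^esub>) F"
  proof (rule comm_monoid.finprod_cong'[OF comm_group.axioms(1)[OF cZ] refl])
    show "(\<lambda>y. if y = x j then f y else \<one>\<^bsub>Z p\<^esub>) \<in> F \<rightarrow> carrier (Z p)"
      using fc gZ by (auto simp: group.is_monoid monoid.one_closed)
    fix y assume yF: "y \<in> F"
    then obtain i where yi: "y = x i" using FS by blast
    have "\<phi> (y [^]\<^bsub>G\<^esub> c y) = (\<phi> y) [^]\<^bsub>Z p\<^esub> c y"
      by (rule hom_int_pow[OF phom _ gG gZ]) (simp add: yi xc)
    also have "\<phi> y = eps p i j" unfolding \<phi>_def yi hx by simp
    finally have e: "\<phi> (y [^]\<^bsub>G\<^esub> c y) = (eps p i j) [^]\<^bsub>Z p\<^esub> c y" .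
    show "\<phi> (y [^]\<^bsub>G\<^esub> c y) = (if y = x j then f y else \<one>\<^bsub>Z p\<^esub>)"
    proof (cases "i = j")
      case True then show ?thesis using e yi by (simp add: eps_def f_def)
    next
      case False
      then have "y \<noteq> x j" using yi inj by (simp add: inj_eq)
      moreover have "eps p i j = \<one>\<^bsub>Z p\<^esub>" using False by (simp add: eps_def one_Zp_inf)
      ultimately show ?thesis using e gZ by (simp add: group.int_pow_one)
    qed
  qed
  also have "\<dots> = f (x j)"
    by (rule comm_monoid.finprod_singleton_swap[OF comm_group.axioms(1)[OF cZ] y0 F fc])
  finally have "f (x j) = 0" using eq1 by (simp add: one_Zp_inf)
  then have "frac (of_int (c (x j)) * (1 / of_nat p) :: rat) = 0" unfolding f_def
    by (simp add: int_pow_Zp_inf[OF p0 ip])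
  then have "(of_int (c (x j)) * (1 / of_nat p) :: rat) \<in> \<int>" by simp
  then obtain m where m: "of_int (c (x j)) * (1 / of_nat p) = (of_int m :: rat)" by (elim Ints_cases)
  then have "(of_int (c (x j)) :: rat) = of_int (int p * m)" using p0 by (simp add: field_simps)
  then have "c (x j) = int p * m" by (simp only: of_int_eq_iff)
  then show ?thesis by simp
qed


lemma indep_meas:
  fixes G :: "('a, 'b) monoid_scheme" and x :: "nat \<Rightarrow> 'a"
  assumes G: "comm_group G" and tf: "torsion_free G" and p1: "p > 1" and h: "h \<in> hom G (D p)"
    and hx: "\<And>i. h (x i) = eps p i" and xc: "\<And>i. x i \<in> carrier G" and inj: "inj x"
    and F: "finite F" and FS: "F \<subseteq> range x"
  shows "\<forall>c. (\<Sum>y\<in>F. nat \<bar>c y\<bar>) = n \<longrightarrow> finprod G (\<lambda>y. y [^]\<^bsub>G\<^esub> (c y :: int)) F = \<one>\<^bsub>G\<^esub> \<longrightarrow> (\<forall>y\<in>F. c y = 0)"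
proof (induction n rule: less_induct)
  case (less n)
  show ?case
  proof (intro allI impI)
    fix c :: "'a \<Rightarrow> int"
    assume sn: "(\<Sum>y\<in>F. nat \<bar>c y\<bar>) = n" and rel: "finprod G (\<lambda>y. y [^]\<^bsub>G\<^esub> c y) F = \<one>\<^bsub>G\<^esub>"
    have gG: "group G" using G comm_group.axioms(2) by blast
    have yc: "\<And>y. y \<in> F \<Longrightarrow> y \<in> carrier G" using FS xc by blast
    have dv: "int p dvd c y" if yF: "y \<in> F" for y
    proof -
      obtain j where yj: "y = x j" using yF FS by blast
      show ?thesis unfolding yj
        by (rule rel_dvd[OF G p1 h hx xc inj F FS rel]) (use yF yj in simp)
    qed
    define c' where "c' y = c y div int p" for y
    have cc: "c y = int p * c' y" if "y \<in> F" for y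
      using dv[OF that] unfolding c'_def by simp
    have pw: "y [^]\<^bsub>G\<^esub> c y = (y [^]\<^bsub>G\<^esub> c' y) [^]\<^bsub>G\<^esub> p" if yF: "y \<in> F" for y
    proof -
      have "(y [^]\<^bsub>G\<^esub> c' y) [^]\<^bsub>G\<^esub> (int p) = y [^]\<^bsub>G\<^esub> (c' y * int p)"
        by (rule group.int_pow_pow[OF gG yc[OF yF]])
      then show ?thesis using cc[OF yF] by (simp add: int_pow_int mult.commute)
    qed
    have f1: "(\<lambda>y. y [^]\<^bsub>G\<^esub> c' y) \<in> F \<rightarrow> carrier G" using yc gG by (auto simp: group.int_pow_closed)
    have "finprod G (\<lambda>y. y [^]\<^bsub>G\<^esub> c y) F = finprod G (\<lambda>y. (y [^]\<^bsub>G\<^esub> c' y) [^]\<^bsub>G\<^esub> p) F"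
      by (rule comm_monoid.finprod_cong'[OF comm_group.axioms(1)[OF G] refl])
         (use pw yc gG in \<open>auto simp: group.int_pow_closed group.is_monoid monoid.nat_pow_closed\<close>)
    also have "\<dots> = (finprod G (\<lambda>y. y [^]\<^bsub>G\<^esub> c' y) F) [^]\<^bsub>G\<^esub> p"
      by (rule finprod_pow[OF G F f1])
    finally have "(finprod G (\<lambda>y. y [^]\<^bsub>G\<^esub> c' y) F) [^]\<^bsub>G\<^esub> p = \<one>\<^bsub>G\<^esub>" using rel by simp
    moreover have fc: "finprod G (\<lambda>y. y [^]\<^bsub>G\<^esub> c' y) F \<in> carrier G"
      by (rule comm_monoid.finprod_closed[OF comm_group.axioms(1)[OF G] f1])
    moreover have T: "\<forall>z\<in>carrier G. \<forall>n::nat. n > 0 \<and> z [^]\<^bsub>G\<^esub> n = \<one>\<^bsub>G\<^esub> \<longrightarrow> z = \<one>\<^bsub>G\<^esub>"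
      using tf unfolding torsion_free_def .
    ultimately have rel': "finprod G (\<lambda>y. y [^]\<^bsub>G\<^esub> c' y) F = \<one>\<^bsub>G\<^esub>"
      using T[rule_format, OF fc, of p] p1 by simp
    show "\<forall>y\<in>F. c y = 0"
    proof (cases "\<forall>y\<in>F. c y = 0")
      case True then show ?thesis .
    next
      case False
      then obtain y0 where y0: "y0 \<in> F" "c y0 \<noteq> 0" by blast
      have le: "\<forall>y\<in>F. nat \<bar>c' y\<bar> \<le> nat \<bar>c y\<bar>"
      proof
        fix y assume "y \<in> F"
        then have "\<bar>c y\<bar> = int p * \<bar>c' y\<bar>" using cc by (simp add: abs_mult)
        then show "nat \<bar>c' y\<bar> \<le> nat \<bar>c y\<bar>" using p1
          by (simp add: nat_le_eq_zle mult_le_cancel_right1)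
      qed
      have lt: "\<exists>y\<in>F. nat \<bar>c' y\<bar> < nat \<bar>c y\<bar>"
      proof
        have "\<bar>c y0\<bar> = int p * \<bar>c' y0\<bar>" using cc[OF y0(1)] by (simp add: abs_mult)
        moreover have "c' y0 \<noteq> 0" using cc[OF y0(1)] y0(2) by auto
        ultimately show "nat \<bar>c' y0\<bar> < nat \<bar>c y0\<bar>" using p1 by (simp add: nat_less_eq_zless)
      qed (rule y0(1))
      have "(\<Sum>y\<in>F. nat \<bar>c' y\<bar>) < n"
        unfolding sn[symmetric] by (rule sum_strict_mono_ex1[OF F le lt])
      then have "\<forall>y\<in>F. c' y = 0" using less[of "\<Sum>y\<in>F. nat \<bar>c' y\<bar>"] rel' by blast
      then show ?thesis using cc by simp
    qed
  qed
qed

theorem forward: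
  fixes G :: "('a, 'b) monoid_scheme" and p :: nat
  assumes G: "comm_group G" and tf: "torsion_free G" and p: "Factorial_Ring.prime p"
    and h: "h \<in> hom G (D p)" and surj: "h ` carrier G = carrier (D p)"
  shows "infinite_rank G"
proof -
  have p1: "p > 1" using p prime_gt_1_nat by blast
  have ex: "\<forall>i. \<exists>g. g \<in> carrier G \<and> h g = eps p i"
  proof
    fix i
    have "eps p i \<in> h ` carrier G" using eps_carrier[OF p1] surj by simp
    then show "\<exists>g. g \<in> carrier G \<and> h g = eps p i" by (elim imageE) auto
  qed
  obtain x where x: "\<And>i. x i \<in> carrier G \<and> h (x i) = eps p i" using choice[OF ex] by blast
  have xc: "\<And>i. x i \<in> carrier G" and hx: "\<And>i. h (x i) = eps p i" using x by auto
  have inj: "inj x"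
  proof (rule injI)
    fix i j assume "x i = x j"
    then have "eps p i = eps p j" using hx by metis
    then have "eps p i i = eps p j i" by simp
    then show "i = j" using p1 by (simp add: eps_def split: if_splits)
  qed
  have "ab_independent G (range x)"
    unfolding ab_independent_def
  proof (intro conjI allI impI)
    show "range x \<subseteq> carrier G" using xc by auto
    fix F c assume a: "F \<subseteq> range x \<and> finite F \<and> finprod G (\<lambda>y. y [^]\<^bsub>G\<^esub> (c y :: int)) F = \<one>\<^bsub>G\<^esub>"
    then show "\<forall>y\<in>F. c y = 0"
      using indep_meas[OF G tf p1 h hx xc inj, of F "\<Sum>y\<in>F. nat \<bar>c y\<bar>"] by blast
  qed
  moreover have "infinite (range x)" using range_inj_infinite[OF inj] .
  ultimately show ?thesis unfolding infinite_rank_def by blast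
qed


theorem proposition3p5:
  fixes G :: "('a, 'b) monoid_scheme" and p :: nat
  assumes "comm_group G" and "torsion_free G" and "Factorial_Ring.prime p"
  shows "(\<exists>N. N \<lhd> G \<and> G Mod N \<cong> Zp_inf_sum p) \<longleftrightarrow> infinite_rank G"
proof
  assume "\<exists>N. N \<lhd> G \<and> G Mod N \<cong> Zp_inf_sum p"
  then obtain N \<phi> where N: "N \<lhd> G" and \<phi>: "\<phi> \<in> iso (G Mod N) (Zp_inf_sum p)"
    unfolding is_iso_def by blast
  define h where "h a = \<phi> (r_coset G N a)" for a
  have "\<phi> \<circ> (\<lambda>a. r_coset G N a) \<in> hom G (Zp_inf_sum p)"
    by (rule hom_compose[OF normal.r_coset_hom_Mod[OF N]]) (use \<phi> in \<open>simp add: iso_def\<close>)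
  then have hh: "h \<in> hom G (Zp_inf_sum p)" unfolding h_def by (simp add: comp_def)
  have c1: "(\<lambda>a. r_coset G N a) ` carrier G = carrier (G Mod N)"
    by (auto simp: FactGroup_def RCOSETS_def)
  have c2: "\<phi> ` carrier (G Mod N) = carrier (Zp_inf_sum p)"
    using \<phi> by (simp add: iso_def bij_betw_def)
  have "h ` carrier G = carrier (Zp_inf_sum p)"
    unfolding h_def using c1 c2 by (simp add: image_image[symmetric])
  then show "infinite_rank G" by (rule forward[OF assms hh])
next
  assume "infinite_rank G"
  then obtain h where h: "h \<in> hom G (Zp_inf_sum p)" and hs: "h ` carrier G = carrier (Zp_inf_sum p)"
    using backward[OF assms(1,3)] by blast
  have p0: "p > 0" using assms(3) prime_gt_0_nat by blast
  have gh: "group_hom G (Zp_inf_sum p) h"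
    unfolding group_hom_def group_hom_axioms_def
    using assms(1) group_D[OF p0] h by (simp add: comm_group.axioms(2))
  have "kernel G (Zp_inf_sum p) h \<lhd> G" by (rule group_hom.normal_kernel[OF gh])
  moreover have "G Mod kernel G (Zp_inf_sum p) h \<cong> Zp_inf_sum p"
    by (rule group_hom.FactGroup_iso[OF gh hs])
  ultimately show "\<exists>N. N \<lhd> G \<and> G Mod N \<cong> Zp_inf_sum p" by blast
qed


end
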